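(* Let $\mathrm{Q}(E)\subset\mathrm{QPH}_0(E)$ be the locus where $\Phi=0$, let $\mathrm{R}(E)$ be the locus where $\Phi\ne 0$ and $L(\Phi)=E_1$ (defined when $m_1>m_2$), and for an integer $j$ let $\mathrm{S}_j(E)$ be the locus where $\Phi\neq0$, $\det\Phi=0$ and $L(\Phi)\ne E_1$ has degree $j$. Then, for every integer $m$, $$\mathrm{QPH}_0(E)=\begin{cases}\mathrm{Q}(E)\sqcup\mathrm{S}_m(E)\sqcup\mathrm{S}_{m-1}(E) & E\cong\mathcal O(m)\oplus\mathcal O(m),\\ \mathrm{Q}(E)\sqcup\mathrm{R}(E)\sqcup\mathrm{S}_m(E) & E\cong\mathcal O(m+1)\oplus\mathcal O(m),\\ \mathrm{Q}(E)\sqcup\mathrm{R}(E)\sqcup\mathrm{S}_{m-1}(E) & E\cong\mathcal O(m+1)\oplus\mathcal O(m-1),\end{cases}$$ and $\mathrm{QPH}_0(E)=\mathrm{Q}(E)\sqcup\mathrm{R}(E)$ if $m_1-m_2\ge 3$.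
   Context: Fix $z_1\in\mathbb{CP}^1\setminus\{0,1,\infty\}$, set $z_2=0$, $z_3=1$, $z_4=\infty$ and $D=z_1+z_2+z_3+z_4$. Let $E\to\mathbb{CP}^1$ be a holomorphic vector bundle of rank 2, $E\cong\mathcal O(m_1)\oplus\mathcal O(m_2)$, $m_1\ge m_2$; when $m_1>m_2$, $E_1\subset E$ is the unique subbundle isomorphic to $\mathcal O(m_1)$. A quasi-parabolic structure on $E$ is a tuple $(F_1,\dots,F_4)$ of lines $F_i\subset E|_{z_i}$. A (strongly) parabolic Higgs field compatible with it is $\Phi\in H^0(\mathbb{CP}^1,\mathrm{End}(E)\otimes K_{\mathbb{CP}^1}(D))$ such that each residue $\mathrm{Res}_{z_i}\Phi$ is nilpotent with $F_i\subset\ker\mathrm{Res}_{z_i}\Phi$. $\mathrm{QPH}(E)$ is the space of all such tuples, and $\mathrm{QPH}_0(E)$ is the subset where $\det\Phi=0$ in $H^0(\mathbb{CP}^1,K^2_{\mathbb{CP}^1}(D))$. A nonzero nilpotent $\Phi$ preserves a unique line subbundle $L(\Phi)\subset E$ (the saturation of $\ker\Phi$). *)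

theory Defs
  imports "HOL-Analysis.Analysis" "HOL-Computational_Algebra.Polynomial"
begin

(* P^1 = C \<union> {\<infinity>}, affine coordinate z on U0 = C, w = 1/z on U\<infinity>.
   E = O(m1) \<oplus> O(m2); a section of O(k) is a polynomial f(z) of degree \<le> k,
   with f\<^sub>\<infinity>(w) = w^k f(1/w).  Fibres of E are identified with C^2 via the
   standard frame on U0 (at z1, 0, 1) and via the frame on U\<infinity> (at \<infinity>).
   A section \<Phi> of End(E) \<otimes> K(D) is written uniquely as
       \<Phi> = A(z) dz / (z (z-1) (z-z1)),
   where A is a 2x2 matrix of polynomials with  deg A_ij \<le> m_i - m_j + 2
   (A_ij = 0 if m_i - m_j + 2 < 0).  We represent \<Phi> by A. *)

type_synonym cvec = "complex^2"
type_synonym cmat = "complex^2^2"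
type_synonym higgs = "complex poly^2^2"
type_synonym qpstruct = "cvec set \<times> cvec set \<times> cvec set \<times> cvec set"

definition wt :: "int \<Rightarrow> int \<Rightarrow> 2 \<Rightarrow> int" where
  "wt m1 m2 i = (if i = 1 then m1 else m2)"

definition is_line :: "cvec set \<Rightarrow> bool" where
  "is_line S \<longleftrightarrow> (\<exists>v. v \<noteq> 0 \<and> S = {c *s v | c. True})"

definition nilpotent_mat :: "cmat \<Rightarrow> bool" where
  "nilpotent_mat M \<longleftrightarrow> (\<exists>k. ((\<lambda>N. M ** N) ^^ k) (mat 1) = 0)"

definition is_higgs_section :: "int \<Rightarrow> int \<Rightarrow> higgs \<Rightarrow> bool" where
  "is_higgs_section m1 m2 A \<longleftrightarrow>
     (\<forall>i j. A$i$j = 0 \<or> int (degree (A$i$j)) \<le> wt m1 m2 i - wt m1 m2 j + 2)"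

definition qD :: "complex \<Rightarrow> complex poly" where
  "qD z1 = [:0, 1:] * [:-1, 1:] * [:-z1, 1:]"

definition res_fin :: "complex \<Rightarrow> higgs \<Rightarrow> complex \<Rightarrow> cmat" where
  "res_fin z1 A p = (\<chi> i j. poly (A$i$j) p / poly (pderiv (qD z1)) p)"

(* residue of \<Phi> at \<infinity> (frame at infinity, coordinate w = 1/z) *)
definition res_inf :: "int \<Rightarrow> int \<Rightarrow> higgs \<Rightarrow> cmat" where
  "res_inf m1 m2 A = (\<chi> i j. - coeff (A$i$j) (nat (wt m1 m2 i - wt m1 m2 j + 2)))"

definition compat :: "cvec set \<Rightarrow> cmat \<Rightarrow> bool" where
  "compat F R \<longleftrightarrow> nilpotent_mat R \<and> F \<subseteq> {v. R *v v = 0}"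

(* z_1 = z1, z_2 = 0, z_3 = 1, z_4 = \<infinity> *)
definition QPH :: "int \<Rightarrow> int \<Rightarrow> complex \<Rightarrow> (qpstruct \<times> higgs) set" where
  "QPH m1 m2 z1 = {((F1, F2, F3, F4), A).
      is_line F1 \<and> is_line F2 \<and> is_line F3 \<and> is_line F4 \<and>
      is_higgs_section m1 m2 A \<and>
      compat F1 (res_fin z1 A z1) \<and> compat F2 (res_fin z1 A 0) \<and>
      compat F3 (res_fin z1 A 1) \<and> compat F4 (res_inf m1 m2 A)}"

(* det \<Phi> = det A \<cdot> dz^2 / q^2, so det \<Phi> = 0 iff det A = 0 *)
definition hdet :: "higgs \<Rightarrow> complex poly" where
  "hdet A = A$1$1 * A$2$2 - A$1$2 * A$2$1"

definition QPH0 :: "int \<Rightarrow> int \<Rightarrow> complex \<Rightarrow> (qpstruct \<times> higgs) set" where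
  "QPH0 m1 m2 z1 = {x \<in> QPH m1 m2 z1. hdet (snd x) = 0}"

(* p gives a (saturated) line subbundle O(j) \<subseteq> E: a nowhere vanishing section
   (including at \<infinity>) of E(-j) = O(m1-j) \<oplus> O(m2-j) *)
definition line_subbundle :: "int \<Rightarrow> int \<Rightarrow> int \<Rightarrow> complex poly^2 \<Rightarrow> bool" where
  "line_subbundle m1 m2 j p \<longleftrightarrow>
     (\<forall>i. p$i = 0 \<or> int (degree (p$i)) \<le> wt m1 m2 i - j) \<and>
     (\<forall>z. \<exists>i. poly (p$i) z \<noteq> 0) \<and>
     (\<exists>i. wt m1 m2 i - j \<ge> 0 \<and> coeff (p$i) (nat (wt m1 m2 i - j)) \<noteq> 0)"

(* L(\<Phi>) is the line subbundle O(j) given by p: p spans the saturation of ker \<Phi> *)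
definition kernel_line :: "int \<Rightarrow> int \<Rightarrow> higgs \<Rightarrow> int \<Rightarrow> complex poly^2 \<Rightarrow> bool" where
  "kernel_line m1 m2 A j p \<longleftrightarrow> line_subbundle m1 m2 j p \<and> A *v p = 0"

definition Qloc :: "int \<Rightarrow> int \<Rightarrow> complex \<Rightarrow> (qpstruct \<times> higgs) set" where
  "Qloc m1 m2 z1 = {x \<in> QPH0 m1 m2 z1. snd x = 0}"

(* L(\<Phi>) = E_1 = O(m1) \<oplus> 0 *)
definition Rloc :: "int \<Rightarrow> int \<Rightarrow> complex \<Rightarrow> (qpstruct \<times> higgs) set" where
  "Rloc m1 m2 z1 = {x \<in> QPH0 m1 m2 z1. snd x \<noteq> 0 \<and>
      (\<exists>j p. kernel_line m1 m2 (snd x) j p \<and> p$2 = 0)}"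

(* deg L(\<Phi>) = j and L(\<Phi>) \<noteq> E_1 (the latter only meaningful when m1 > m2) *)
definition Sloc :: "int \<Rightarrow> int \<Rightarrow> complex \<Rightarrow> int \<Rightarrow> (qpstruct \<times> higgs) set" where
  "Sloc m1 m2 z1 j = {x \<in> QPH0 m1 m2 z1. snd x \<noteq> 0 \<and>
      (\<exists>p. kernel_line m1 m2 (snd x) j p \<and> (m1 > m2 \<longrightarrow> p$2 \<noteq> 0))}"

definition disj_union2 :: "'a set \<Rightarrow> 'a set \<Rightarrow> 'a set \<Rightarrow> bool" where
  "disj_union2 X A B \<longleftrightarrow> X = A \<union> B \<and> A \<inter> B = {}"

definition disj_union3 :: "'a set \<Rightarrow> 'a set \<Rightarrow> 'a set \<Rightarrow> 'a set \<Rightarrow> bool" where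
  "disj_union3 X A B C \<longleftrightarrow> X = A \<union> B \<union> C \<and> A \<inter> B = {} \<and> A \<inter> C = {} \<and> B \<inter> C = {}"

end

theory Submission imports Defs "HOL-Computational_Algebra.Polynomial_Factorial" "HOL-Computational_Algebra.Fundamental_Theorem_Algebra" "HOL-Computational_Algebra.Field_as_Ring" begin

lemma MM: fixes M :: cmat
  assumes "det M = 0" shows "M ** M = (\<chi> i j. (M$1$1 + M$2$2) * M$i$j)"
  using assms unfolding det_2
  by (auto simp: vec_eq_iff matrix_matrix_mult_def sum_2 forall_2 algebra_simps)

lemma nil_trace: fixes M :: cmat
  assumes "nilpotent_mat M" shows "M$1$1 + M$2$2 = 0"
proof -
  obtain k where k: "((\<lambda>N. M ** N) ^^ k) (mat 1) = 0" using assms nilpotent_mat_def by blast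
  define pw where "pw n = ((\<lambda>N. M ** N) ^^ n) (mat 1)" for n
  have ps: "pw (Suc n) = M ** pw n" for n by (simp add: pw_def)
  have dp: "det (pw n) = det M ^ n" for n
    by (induction n) (auto simp: ps det_mul pw_def det_I)
  have "k \<noteq> 0"
  proof
    assume "k = 0"
    then have "(mat 1 :: cmat) $ 1 $ 1 = 0" using k by simp
    then show False by (simp add: mat_def)
  qed
  moreover have "det (pw k) = 0" using k by (simp add: pw_def det_2)
  ultimately have d0: "det M = 0" using dp by simp
  define t where "t = M$1$1 + M$2$2"
  have pwS: "pw (Suc n) = (\<chi> i j. t ^ n * M$i$j)" for n
  proof (induction n)
    case 0 then show ?case by (simp add: pw_def vec_eq_iff)
  next
    case (Suc n)
    have "pw (Suc (Suc n)) = M ** pw (Suc n)" by (rule ps)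
    also have "\<dots> = (\<chi> i j. t ^ n * (M ** M)$i$j)" unfolding Suc
      by (auto simp: vec_eq_iff matrix_matrix_mult_def sum_2 algebra_simps)
    also have "\<dots> = (\<chi> i j. t ^ Suc n * M$i$j)" using MM[OF d0] by (simp add: t_def mult_ac)
    finally show ?case .
  qed
  obtain n where n: "k = Suc n" using \<open>k \<noteq> 0\<close> not0_implies_Suc by blast
  have z: "\<forall>i j. t ^ n * M$i$j = 0" using k pwS[of n] unfolding pw_def n
    by (simp add: vec_eq_iff)
  show ?thesis
  proof (cases "t = 0")
    case True then show ?thesis by (simp add: t_def)
  next
    case False then have "\<forall>i j. M$i$j = 0" using z by simp
    then show ?thesis by simp
  qed
qed
lemma qD_deriv: "poly (pderiv (qD z1)) x = 3 * x^2 - 2 * (1 + z1) * x + z1"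
  by (simp add: qD_def pderiv_mult pderiv_pCons algebra_simps power2_eq_square)

lemma wt1[simp]: "wt m1 m2 1 = m1" and wt2[simp]: "wt m1 m2 2 = m2"
  by (simp_all add: wt_def)

lemma trace0:
  assumes "((F1,F2,F3,F4), A) \<in> QPH m1 m2 z1" "z1 \<noteq> 0" "z1 \<noteq> 1"
  shows "A$1$1 + A$2$2 = 0"
proof -
  have hs: "is_higgs_section m1 m2 A" and c1: "compat F1 (res_fin z1 A z1)"
    and c2: "compat F2 (res_fin z1 A 0)" and c3: "compat F3 (res_fin z1 A 1)"
    using assms(1) by (auto simp: QPH_def)
  define t where "t = A$1$1 + A$2$2"
  have root: "poly t p = 0" if "compat F (res_fin z1 A p)" "poly (pderiv (qD z1)) p \<noteq> 0" for F p
  proof -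
    have "(res_fin z1 A p)$1$1 + (res_fin z1 A p)$2$2 = 0"
      using that(1) nil_trace compat_def by blast
    then have "(poly (A$1$1) p + poly (A$2$2) p) / poly (pderiv (qD z1)) p = 0"
      by (simp add: res_fin_def add_divide_distrib)
    then show ?thesis using that(2) by (simp add: t_def)
  qed
  have r1: "poly t z1 = 0"
    using root[OF c1] assms(2,3) by (simp add: qD_deriv power2_eq_square algebra_simps)
  have r2: "poly t 0 = 0"
    using root[OF c2] assms(2,3) by (simp add: qD_deriv)
  have r3: "poly t 1 = 0"
    using root[OF c3] assms(2,3) by (simp add: qD_deriv)
  have dA: "degree (A$i$i) \<le> 2" for i
    using hs unfolding is_higgs_section_def by (metis add.commute add_0 degree_0 diff_self int_ops(3) nat_int nat_le_iff zero_le_numeral)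
  have dt: "degree t \<le> 2" unfolding t_def using dA[of 1] dA[of 2]
    by (meson degree_add_le)
  show ?thesis
  proof (rule ccontr)
    assume "A$1$1 + A$2$2 \<noteq> 0"
    then have "t \<noteq> 0" by (simp add: t_def)
    then have "card {x. poly t x = 0} \<le> 2" using card_poly_roots_bound dt order.trans by blast
    moreover have "{0, 1, z1} \<subseteq> {x. poly t x = 0}" using r1 r2 r3 by auto
    moreover have "finite {x. poly t x = 0}" using \<open>t \<noteq> 0\<close> poly_roots_finite by blast
    ultimately have "card {0, 1, z1} \<le> 2" by (meson card_mono order.trans)
    then show False using assms(2,3) by simp
  qed
qed

lemma bez: fixes p q :: "complex poly"
  assumes "\<forall>z. poly p z \<noteq> 0 \<or> poly q z \<noteq> 0" shows "\<exists>u v. u*p + v * q = 1"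
proof -
  define g where "g = gcd p q"
  have "\<not> (\<exists>z. poly g z = 0)"
  proof
    assume "\<exists>z. poly g z = 0"
    then obtain z where "poly g z = 0" by blast
    moreover have "g dvd p" "g dvd q" by (auto simp: g_def)
    ultimately have "poly p z = 0" "poly q z = 0" by (auto simp: dvd_def)
    then show False using assms by auto
  qed
  then obtain a l where "a \<noteq> 0" "l = 0" "g = pCons a l"
    using fundamental_theorem_of_algebra_alt by blast
  then have "is_unit g" by (simp add: is_unit_pCons_iff)
  then have "gcd p q = 1" by (simp add: g_def)
  then show ?thesis using bezout_coefficients_fst_snd by metis
qed

lemma nr_of_bez: fixes p q :: "complex poly"
  assumes "u*p + v * q = 1" shows "poly p z \<noteq> 0 \<or> poly q z \<noteq> 0"
proof -
  have "poly (u*p + v * q) z = 1" using assms by simp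
  then show ?thesis by auto
qed

lemma factor_comp: fixes a b c d p1 p2 u v r :: "complex poly"
  assumes "a*p1 + b*p2 = 0" "c*p1 + d*p2 = 0" "a + d = 0" "u*p1 + v * p2 = 1"
    "r = u*(b*u - a * v) + v * (d*u - c * v)"
  shows "a = - r*p1*p2 \<and> b = r*p1*p1 \<and> c = - r*p2*p2 \<and> d = r*p2*p1"
proof -
  define s1 where "s1 = b*u - a * v"
  define s2 where "s2 = d*u - c * v"
  have e1: "a = - s1*p2" using assms(1,4) unfolding s1_def by algebra
  have e2: "b = s1*p1" using assms(1,4) unfolding s1_def by algebra
  have e3: "c = - s2*p2" using assms(2,4) unfolding s2_def by algebra
  have e4: "d = s2*p1" using assms(2,4) unfolding s2_def by algebra
  have q0: "s2*p1 - s1*p2 = 0" using assms(3) e1 e4 by simp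
  have f1: "s1 = r*p1" using q0 assms(4,5) unfolding s1_def[symmetric] s2_def[symmetric] by algebra
  have f2: "s2 = r*p2" using q0 assms(4,5) unfolding s1_def[symmetric] s2_def[symmetric] by algebra
  show ?thesis using e1 e2 e3 e4 f1 f2 by (simp add: mult_ac)
qed

lemma mv_comp: fixes A :: higgs and p :: "complex poly^2"
  shows "A *v p = 0 \<longleftrightarrow> A$1$1*p$1 + A$1$2*p$2 = 0 \<and> A$2$1*p$1 + A$2$2*p$2 = 0"
  by (simp add: vec_eq_iff forall_2 matrix_vector_mult_def sum_2)

lemma ls_deg:
  assumes "line_subbundle m1 m2 j p"
  shows "\<exists>i. p$i \<noteq> 0 \<and> int (degree (p$i)) = wt m1 m2 i - j"
    "\<And>i. p$i \<noteq> 0 \<Longrightarrow> int (degree (p$i)) \<le> wt m1 m2 i - j"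
proof -
  show le: "\<And>i. p$i \<noteq> 0 \<Longrightarrow> int (degree (p$i)) \<le> wt m1 m2 i - j"
    using assms unfolding line_subbundle_def by blast
  obtain i where i: "wt m1 m2 i - j \<ge> 0" "coeff (p$i) (nat (wt m1 m2 i - j)) \<noteq> 0"
    using assms unfolding line_subbundle_def by blast
  then have nz: "p$i \<noteq> 0" by auto
  have "nat (wt m1 m2 i - j) \<le> degree (p$i)" using i(2) le_degree by blast
  then have "int (degree (p$i)) = wt m1 m2 i - j" using le[OF nz] i(1) by linarith
  then show "\<exists>i. p$i \<noteq> 0 \<and> int (degree (p$i)) = wt m1 m2 i - j" using nz by blast
qed

lemma ls_bez:
  assumes "line_subbundle m1 m2 j p"
  shows "\<exists>u v. u * p$1 + v * p$2 = 1"
proof -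
  have "\<forall>z. \<exists>i. poly (p$i) z \<noteq> 0" using assms unfolding line_subbundle_def by blast
  then have "\<forall>z. poly (p$1) z \<noteq> 0 \<or> poly (p$2) z \<noteq> 0" by (metis exhaust_2)
  then show ?thesis using bez by blast
qed

lemma factor:
  assumes "kernel_line m1 m2 A j p" "A$1$1 + A$2$2 = 0"
  shows "\<exists>r. A$1$1 = - r*p$1*p$2 \<and> A$1$2 = r*p$1*p$1 \<and> A$2$1 = - r*p$2*p$2 \<and> A$2$2 = r*p$2*p$1"
proof -
  obtain u v where uv: "u * p$1 + v * p$2 = 1" using ls_bez assms(1) kernel_line_def by blast
  have "A *v p = 0" using assms(1) kernel_line_def by blast
  then have e: "A$1$1*p$1 + A$1$2*p$2 = 0" "A$2$1*p$1 + A$2$2*p$2 = 0" by (auto simp: mv_comp)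
  show ?thesis using factor_comp[OF e assms(2) uv refl] by blast
qed

lemma A_nz_r:
  fixes A :: higgs
  assumes "A \<noteq> 0" "A$1$1 = - r*p1*p2" "A$1$2 = r*p1*p1" "A$2$1 = - r*p2*p2" "A$2$2 = r*p2*p1"
  shows "r \<noteq> 0"
proof
  assume "r = 0"
  then have "A = 0" using assms(2-5) by (simp add: vec_eq_iff forall_2)
  then show False using assms(1) by simp
qed

lemma bound:
  assumes hs: "is_higgs_section m1 m2 A" and kl: "kernel_line m1 m2 A j p"
    and tr: "A$1$1 + A$2$2 = 0" and nz: "A \<noteq> 0"
  shows "m1 + m2 - 2 \<le> 2*j"
proof -
  obtain r where r: "A$1$1 = - r*p$1*p$2" "A$1$2 = r*p$1*p$1" "A$2$1 = - r*p$2*p$2" "A$2$2 = r*p$2*p$1"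
    using factor[OF kl tr] by blast
  have rnz: "r \<noteq> 0" using A_nz_r[OF nz r] .
  have ls: "line_subbundle m1 m2 j p" using kl kernel_line_def by blast
  obtain i where i: "p$i \<noteq> 0" "int (degree (p$i)) = wt m1 m2 i - j" using ls_deg(1)[OF ls] by blast
  have hb: "A$k$l = 0 \<or> int (degree (A$k$l)) \<le> wt m1 m2 k - wt m1 m2 l + 2" for k l
    using hs is_higgs_section_def by blast
  consider "i = 1" | "i = 2" using exhaust_2 by blast
  then show ?thesis
  proof cases
    case 1
    have "A$1$2 \<noteq> 0" using r(2) rnz i(1) 1 by simp
    moreover have "degree (A$1$2) = degree r + degree (p$1) + degree (p$1)"
      using r(2) rnz i(1) 1 by (simp add: degree_mult_eq)
    ultimately show ?thesis using hb[of 1 2] i(2) 1 by simp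
  next
    case 2
    have "A$2$1 \<noteq> 0" using r(3) rnz i(1) 2 by simp
    moreover have "degree (A$2$1) = degree r + degree (p$2) + degree (p$2)"
      using r(3) rnz i(1) 2 by (simp add: degree_mult_eq)
    ultimately show ?thesis using hb[of 2 1] i(2) 2 by simp
  qed
qed

lemma upper:
  assumes "kernel_line m1 m2 A j p" "p$i \<noteq> 0"
  shows "j \<le> wt m1 m2 i"
proof -
  have "line_subbundle m1 m2 j p" using assms(1) kernel_line_def by blast
  then have "int (degree (p$i)) \<le> wt m1 m2 i - j" using ls_deg(2) assms(2) by blast
  then show ?thesis by linarith
qed

lemma uniq:
  assumes kl: "kernel_line m1 m2 A j p" and kl': "kernel_line m1 m2 A j' p'"
    and tr: "A$1$1 + A$2$2 = 0" and nz: "A \<noteq> 0"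
  shows "(\<forall>i. p'$i = 0 \<longleftrightarrow> p$i = 0) \<and> j = j'"
proof -
  obtain r where r: "A$1$1 = - r*p$1*p$2" "A$1$2 = r*p$1*p$1" "A$2$1 = - r*p$2*p$2" "A$2$2 = r*p$2*p$1"
    using factor[OF kl tr] by blast
  have rnz: "r \<noteq> 0" using A_nz_r[OF nz r] .
  obtain r' where r': "A$1$1 = - r'*p'$1*p'$2" "A$1$2 = r'*p'$1*p'$1" "A$2$1 = - r'*p'$2*p'$2" "A$2$2 = r'*p'$2*p'$1"
    using factor[OF kl' tr] by blast
  obtain u v where uv: "u * p$1 + v * p$2 = 1" using ls_bez kl kernel_line_def by blast
  obtain u' v' where uv': "u' * p'$1 + v' * p'$2 = 1" using ls_bez kl' kernel_line_def by blast
  have "A *v p' = 0" using kl' kernel_line_def by blast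
  then have e: "A$1$1*p'$1 + A$1$2*p'$2 = 0" "A$2$1*p'$1 + A$2$2*p'$2 = 0" by (auto simp: mv_comp)
  have e1: "r*p$1*(p$1*p'$2 - p$2*p'$1) = 0" using e(1) r by (simp add: algebra_simps)
  have e2: "r*p$2*(p$1*p'$2 - p$2*p'$1) = 0" using e(2) r by (simp add: algebra_simps)
  have pnz: "p$1 \<noteq> 0 \<or> p$2 \<noteq> 0" using uv by auto
  have par: "p$1*p'$2 = p$2*p'$1" using e1 e2 rnz pnz by auto
  define lam where "lam = u * p'$1 + v * p'$2"
  define mu where "mu = u' * p$1 + v' * p$2"
  have l1: "p'$1 = p$1 * lam" "p'$2 = p$2 * lam" unfolding lam_def using par uv by algebra+
  have m1: "p$1 = p'$1 * mu" "p$2 = p'$2 * mu" unfolding mu_def using par uv' by algebra+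
  have q1: "p$1 * (lam*mu - 1) = 0"
  proof -
    have "p$1 = p'$1 * mu" by (rule m1(1))
    also have "\<dots> = p$1 * lam * mu" by (simp only: l1(1))
    finally have "p$1 = p$1 * (lam * mu)" by (simp only: mult.assoc)
    then show ?thesis by (simp add: right_diff_distrib)
  qed
  have q2: "p$2 * (lam*mu - 1) = 0"
  proof -
    have "p$2 = p'$2 * mu" by (rule m1(2))
    also have "\<dots> = p$2 * lam * mu" by (simp only: l1(2))
    finally have "p$2 = p$2 * (lam * mu)" by (simp only: mult.assoc)
    then show ?thesis by (simp add: right_diff_distrib)
  qed
  have lm: "lam * mu = 1" using q1 q2 pnz by auto
  then have lnz: "lam \<noteq> 0" and mnz: "mu \<noteq> 0" by auto
  have dl: "degree lam = 0" using degree_mult_eq[OF lnz mnz] lm by simp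
  have zeq: "p'$i = 0 \<longleftrightarrow> p$i = 0" for i
    using l1 lnz exhaust_2[of i] by auto
  have deq: "degree (p'$i) = degree (p$i)" for i
    using l1 lnz dl exhaust_2[of i] by (cases "p$i = 0") (auto simp: degree_mult_eq)
  have ls: "line_subbundle m1 m2 j p" "line_subbundle m1 m2 j' p'" using kl kl' kernel_line_def by blast+
  obtain i where i: "p$i \<noteq> 0" "int (degree (p$i)) = wt m1 m2 i - j" using ls_deg(1)[OF ls(1)] by blast
  obtain i' where i': "p'$i' \<noteq> 0" "int (degree (p'$i')) = wt m1 m2 i' - j'" using ls_deg(1)[OF ls(2)] by blast
  have "int (degree (p'$i)) \<le> wt m1 m2 i - j'" using ls_deg(2)[OF ls(2)] i(1) zeq by blast
  moreover have "int (degree (p$i')) \<le> wt m1 m2 i' - j" using ls_deg(2)[OF ls(1)] i'(1) zeq by blast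
  ultimately have "j = j'" using i(2) i'(2) deq[of i] deq[of i'] by linarith
  then show ?thesis using zeq by blast
qed

lemma mk_ls:
  fixes p :: "complex poly^2"
  assumes uv: "u * p$1 + v * p$2 = 1"
    and i0: "p$i0 \<noteq> 0" "\<And>i. p$i \<noteq> 0 \<Longrightarrow> wt m1 m2 i0 - int (degree (p$i0)) \<le> wt m1 m2 i - int (degree (p$i))"
  shows "line_subbundle m1 m2 (wt m1 m2 i0 - int (degree (p$i0))) p"
  unfolding line_subbundle_def
proof (intro conjI)
  show "\<forall>i. p $ i = 0 \<or> int (degree (p $ i)) \<le> wt m1 m2 i - (wt m1 m2 i0 - int (degree (p $ i0)))"
    using i0(2) by force
  show "\<forall>z. \<exists>i. poly (p $ i) z \<noteq> 0" using nr_of_bez[OF uv] by blast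
  show "\<exists>i. 0 \<le> wt m1 m2 i - (wt m1 m2 i0 - int (degree (p $ i0))) \<and>
        coeff (p $ i) (nat (wt m1 m2 i - (wt m1 m2 i0 - int (degree (p $ i0))))) \<noteq> 0"
    by (rule exI[of _ i0]) (simp add: i0(1))
qed

lemma mk_ls2:
  fixes p :: "complex poly^2"
  assumes uv: "u * p$1 + v * p$2 = 1"
  shows "\<exists>j. line_subbundle m1 m2 j p"
proof -
  have pnz: "p$1 \<noteq> 0 \<or> p$2 \<noteq> 0" using uv by auto
  define f where "f i = wt m1 m2 i - int (degree (p$i))" for i
  have all2: "\<And>P. (\<forall>i::2. P i) \<longleftrightarrow> P 1 \<and> P 2" by (rule forall_2)
  have "\<exists>i0. p$i0 \<noteq> 0 \<and> (\<forall>i. p$i \<noteq> 0 \<longrightarrow> f i0 \<le> f i)"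
  proof (cases "p$1 \<noteq> 0 \<and> p$2 \<noteq> 0")
    case True
    show ?thesis
    proof (cases "f 1 \<le> f 2")
      case c: True
      have "p$1 \<noteq> 0 \<and> (\<forall>i. p$i \<noteq> 0 \<longrightarrow> f 1 \<le> f i)" unfolding all2 using True c by simp
      then show ?thesis by blast
    next
      case c: False
      have "p$2 \<noteq> 0 \<and> (\<forall>i. p$i \<noteq> 0 \<longrightarrow> f 2 \<le> f i)" unfolding all2 using True c by simp
      then show ?thesis by blast
    qed
  next
    case False
    show ?thesis
    proof (cases "p$1 = 0")
      case c: True
      have "p$2 \<noteq> 0 \<and> (\<forall>i. p$i \<noteq> 0 \<longrightarrow> f 2 \<le> f i)" unfolding all2 using pnz c by simp
      then show ?thesis by blast
    next
      case c: False
      have "p$1 \<noteq> 0 \<and> (\<forall>i. p$i \<noteq> 0 \<longrightarrow> f 1 \<le> f i)" unfolding all2 using False c by simp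
      then show ?thesis by blast
    qed
  qed
  then obtain i0 where "p$i0 \<noteq> 0" "\<And>i. p$i \<noteq> 0 \<Longrightarrow> f i0 \<le> f i" by blast
  then show ?thesis using mk_ls[OF uv, of i0 m1 m2] unfolding f_def by blast
qed

lemma exist:
  fixes A :: higgs
  assumes nz: "A \<noteq> 0" and tr: "A$1$1 + A$2$2 = 0" and dt: "hdet A = 0"
  shows "\<exists>j p. kernel_line m1 m2 A j p"
proof (cases "A$1$1 = 0 \<and> A$1$2 = 0")
  case True
  define p :: "complex poly^2" where "p = (\<chi> i. if i = 1 then 0 else 1)"
  have p1: "p$1 = 0" and p2: "p$2 = 1" by (simp_all add: p_def)
  have uv: "0 * p$1 + 1 * p$2 = 1" using p1 p2 by simp
  obtain j where "line_subbundle m1 m2 j p" using mk_ls2[OF uv] by blast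
  moreover have "A *v p = 0" using True tr p1 p2 by (simp add: mv_comp)
  ultimately show ?thesis unfolding kernel_line_def by blast
next
  case False
  define a where "a = A$1$1"
  define b where "b = A$1$2"
  define c where "c = A$2$1"
  define g where "g = gcd a b"
  have abnz: "a \<noteq> 0 \<or> b \<noteq> 0" using False a_def b_def by simp
  have gnz: "g \<noteq> 0" using abnz g_def by simp
  define a' where "a' = a div g"
  define b' where "b' = b div g"
  have ae: "a = g * a'" unfolding a'_def g_def by simp
  have be: "b = g * b'" unfolding b'_def g_def by simp
  have "coprime a' b'" using div_gcd_coprime[OF abnz] unfolding a'_def b'_def g_def .
  then have "gcd a' b' = 1" by simp
  then obtain u v where uv0: "u * a' + v * b' = 1" using bezout_coefficients_fst_snd by metis
  define p :: "complex poly^2" where "p = (\<chi> i. if i = 1 then b' else - a')"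
  have p1: "p$1 = b'" and p2: "p$2 = - a'" by (simp_all add: p_def)
  have uv: "v * p$1 + (- u) * p$2 = 1" using uv0 p1 p2 by (simp add: algebra_simps)
  obtain j where "line_subbundle m1 m2 j p" using mk_ls2[OF uv] by blast
  moreover have "A *v p = 0"
  proof -
    have d: "A$2$2 = - a" using tr a_def by (simp add: eq_neg_iff_add_eq_0 add.commute)
    have h0: "a * (-a) - b * c = 0" using dt d unfolding hdet_def a_def b_def c_def by simp
    have h: "a * a + b * c = 0" using h0 by algebra
    have r1: "a * b' + b * (- a') = 0" using ae be by (simp add: algebra_simps)
    have "g * (c * b' + a * a') = 0" using h ae be by (simp add: algebra_simps)
    then have r2: "c * b' + (- a) * (- a') = 0" using gnz by simp
    show ?thesis using r1 r2 p1 p2 d by (simp add: mv_comp a_def b_def c_def)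
  qed
  ultimately show ?thesis unfolding kernel_line_def by blast
qed

lemma info:
  assumes "x \<in> QPH0 m1 m2 z1" "z1 \<noteq> 0" "z1 \<noteq> 1"
  shows "is_higgs_section m1 m2 (snd x) \<and> (snd x)$1$1 + (snd x)$2$2 = 0 \<and> hdet (snd x) = 0"
proof -
  obtain F1 F2 F3 F4 A where x: "x = ((F1,F2,F3,F4),A)" by (metis prod.collapse)
  have q: "((F1,F2,F3,F4),A) \<in> QPH m1 m2 z1" "hdet A = 0" using assms(1) x by (auto simp: QPH0_def)
  have "is_higgs_section m1 m2 A" using q(1) by (simp add: QPH_def)
  then show ?thesis using trace0[OF q(1) assms(2,3)] q(2) x by simp
qed

lemma cover:
  assumes "x \<in> QPH0 m1 m2 z1" "z1 \<noteq> 0" "z1 \<noteq> 1" "snd x \<noteq> 0"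
  shows "(\<exists>j p. kernel_line m1 m2 (snd x) j p \<and> p$2 = 0) \<or>
         (\<exists>j p. kernel_line m1 m2 (snd x) j p \<and> p$2 \<noteq> 0 \<and> m1 + m2 - 2 \<le> 2*j \<and> j \<le> m2)"
proof -
  have i: "is_higgs_section m1 m2 (snd x)" "(snd x)$1$1 + (snd x)$2$2 = 0" "hdet (snd x) = 0"
    using info[OF assms(1-3)] by auto
  obtain j p where kl: "kernel_line m1 m2 (snd x) j p" using exist[OF assms(4) i(2,3)] by blast
  show ?thesis
  proof (cases "p$2 = 0")
    case True then show ?thesis using kl by blast
  next
    case False
    have "m1 + m2 - 2 \<le> 2*j" using bound[OF i(1) kl i(2) assms(4)] .
    moreover have "j \<le> m2" using upper[OF kl False] by simp
    ultimately show ?thesis using kl False by blast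
  qed
qed

lemma S_disj:
  assumes "z1 \<noteq> 0" "z1 \<noteq> 1" "j \<noteq> j'"
  shows "Sloc m1 m2 z1 j \<inter> Sloc m1 m2 z1 j' = {}"
proof (rule ccontr)
  assume "Sloc m1 m2 z1 j \<inter> Sloc m1 m2 z1 j' \<noteq> {}"
  then obtain x where x: "x \<in> Sloc m1 m2 z1 j" "x \<in> Sloc m1 m2 z1 j'" by blast
  then have q: "x \<in> QPH0 m1 m2 z1" "snd x \<noteq> 0" by (auto simp: Sloc_def)
  obtain p p' where "kernel_line m1 m2 (snd x) j p" "kernel_line m1 m2 (snd x) j' p'"
    using x by (auto simp: Sloc_def)
  then have "j = j'" using uniq info[OF q(1) assms(1,2)] q(2) by blast
  then show False using assms(3) by simp
qed

lemma RS_disj: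
  assumes "z1 \<noteq> 0" "z1 \<noteq> 1" "m1 > m2"
  shows "Rloc m1 m2 z1 \<inter> Sloc m1 m2 z1 j = {}"
proof (rule ccontr)
  assume "Rloc m1 m2 z1 \<inter> Sloc m1 m2 z1 j \<noteq> {}"
  then obtain x where x: "x \<in> Rloc m1 m2 z1" "x \<in> Sloc m1 m2 z1 j" by blast
  then have q: "x \<in> QPH0 m1 m2 z1" "snd x \<noteq> 0" by (auto simp: Sloc_def)
  obtain j' p' where a: "kernel_line m1 m2 (snd x) j' p'" "p'$2 = 0"
    using x(1) by (auto simp: Rloc_def)
  obtain p where b: "kernel_line m1 m2 (snd x) j p" "p$2 \<noteq> 0"
    using x(2) assms(3) by (auto simp: Sloc_def)
  have "\<forall>i. p'$i = 0 \<longleftrightarrow> p$i = 0" using uniq[OF b(1) a(1)] info[OF q(1) assms(1,2)] q(2) by blast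
  then show False using a(2) b(2) by blast
qed

lemma QR_disj: "Qloc m1 m2 z1 \<inter> Rloc m1 m2 z1 = {}"
  by (auto simp: Qloc_def Rloc_def)
lemma QS_disj: "Qloc m1 m2 z1 \<inter> Sloc m1 m2 z1 j = {}"
  by (auto simp: Qloc_def Sloc_def)
lemma subs: "Qloc m1 m2 z1 \<subseteq> QPH0 m1 m2 z1" "Rloc m1 m2 z1 \<subseteq> QPH0 m1 m2 z1"
    "Sloc m1 m2 z1 j \<subseteq> QPH0 m1 m2 z1"
  by (auto simp: Qloc_def Rloc_def Sloc_def)

theorem corollary4p4:
  fixes z1 :: complex and m1 m2 m :: int
  assumes "z1 \<noteq> 0" and "z1 \<noteq> 1" and "m1 \<ge> m2"
  shows "(m1 = m \<and> m2 = m \<longrightarrow>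
            disj_union3 (QPH0 m1 m2 z1) (Qloc m1 m2 z1) (Sloc m1 m2 z1 m) (Sloc m1 m2 z1 (m - 1)))
       \<and> (m1 = m + 1 \<and> m2 = m \<longrightarrow>
            disj_union3 (QPH0 m1 m2 z1) (Qloc m1 m2 z1) (Rloc m1 m2 z1) (Sloc m1 m2 z1 m))
       \<and> (m1 = m + 1 \<and> m2 = m - 1 \<longrightarrow>
            disj_union3 (QPH0 m1 m2 z1) (Qloc m1 m2 z1) (Rloc m1 m2 z1) (Sloc m1 m2 z1 (m - 1)))
       \<and> (m1 - m2 \<ge> 3 \<longrightarrow> disj_union2 (QPH0 m1 m2 z1) (Qloc m1 m2 z1) (Rloc m1 m2 z1))"
proof (intro conjI impI)
  note z = assms(1,2)
  have QorN: "x \<in> Qloc m1 m2 z1" if "x \<in> QPH0 m1 m2 z1" "snd x = 0" for x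
    using that by (simp add: Qloc_def)
  {
    assume h: "m1 = m \<and> m2 = m"
    have "QPH0 m1 m2 z1 \<subseteq> Qloc m1 m2 z1 \<union> Sloc m1 m2 z1 m \<union> Sloc m1 m2 z1 (m - 1)"
    proof
      fix x assume x: "x \<in> QPH0 m1 m2 z1"
      show "x \<in> Qloc m1 m2 z1 \<union> Sloc m1 m2 z1 m \<union> Sloc m1 m2 z1 (m - 1)"
      proof (cases "snd x = 0")
        case True then show ?thesis using QorN x by blast
      next
        case False
        have i: "is_higgs_section m1 m2 (snd x)" "(snd x)$1$1 + (snd x)$2$2 = 0" "hdet (snd x) = 0"
          using info[OF x z] by auto
        obtain j p where kl: "kernel_line m1 m2 (snd x) j p" using exist[OF False i(2,3)] by blast
        have b: "m1 + m2 - 2 \<le> 2*j" using bound[OF i(1) kl i(2) False] .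
        have "p$1 \<noteq> 0 \<or> p$2 \<noteq> 0" using ls_bez kl kernel_line_def by fastforce
        then have "j \<le> m" using upper[OF kl, of 1] upper[OF kl, of 2] h by auto
        then have "j = m \<or> j = m - 1" using b h by linarith
        then show ?thesis using kl x False h by (auto simp: Sloc_def)
      qed
    qed
    then show "disj_union3 (QPH0 m1 m2 z1) (Qloc m1 m2 z1) (Sloc m1 m2 z1 m) (Sloc m1 m2 z1 (m - 1))"
    proof -
      have a: "Sloc m1 m2 z1 m \<inter> Sloc m1 m2 z1 (m - 1) = {}" using S_disj[OF z, of m "m - 1" m1 m2] by simp
      show ?thesis unfolding disj_union3_def
        using a \<open>QPH0 m1 m2 z1 \<subseteq> _\<close> subs[of m1 m2 z1] QS_disj[of m1 m2 z1] by blast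
    qed
  }
  {
    assume h: "m1 = m + 1 \<and> m2 = m"
    have "QPH0 m1 m2 z1 \<subseteq> Qloc m1 m2 z1 \<union> Rloc m1 m2 z1 \<union> Sloc m1 m2 z1 m"
    proof
      fix x assume x: "x \<in> QPH0 m1 m2 z1"
      show "x \<in> Qloc m1 m2 z1 \<union> Rloc m1 m2 z1 \<union> Sloc m1 m2 z1 m"
      proof (cases "snd x = 0")
        case True then show ?thesis using QorN x by blast
      next
        case False
        show ?thesis
        using cover[OF x z False]
        proof
          assume "\<exists>j p. kernel_line m1 m2 (snd x) j p \<and> p$2 = 0"
          then show ?thesis using x False by (auto simp: Rloc_def)
        next
          assume "\<exists>j p. kernel_line m1 m2 (snd x) j p \<and> p$2 \<noteq> 0 \<and> m1 + m2 - 2 \<le> 2*j \<and> j \<le> m2"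
          then obtain j p where "kernel_line m1 m2 (snd x) j p" "p$2 \<noteq> 0" "m1 + m2 - 2 \<le> 2*j" "j \<le> m2" by blast
          moreover then have "j = m" using h by linarith
          ultimately show ?thesis using x False by (auto simp: Sloc_def)
        qed
      qed
    qed
    then show "disj_union3 (QPH0 m1 m2 z1) (Qloc m1 m2 z1) (Rloc m1 m2 z1) (Sloc m1 m2 z1 m)"
    proof -
      have a: "Rloc m1 m2 z1 \<inter> Sloc m1 m2 z1 (m) = {}" using RS_disj[OF z, of m2 m1 "m"] h by simp
      show ?thesis unfolding disj_union3_def
        using a \<open>QPH0 m1 m2 z1 \<subseteq> _\<close> subs[of m1 m2 z1] QS_disj[of m1 m2 z1] QR_disj[of m1 m2 z1] by blast
    qed
  }
  {
    assume h: "m1 = m + 1 \<and> m2 = m - 1"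
    have "QPH0 m1 m2 z1 \<subseteq> Qloc m1 m2 z1 \<union> Rloc m1 m2 z1 \<union> Sloc m1 m2 z1 (m - 1)"
    proof
      fix x assume x: "x \<in> QPH0 m1 m2 z1"
      show "x \<in> Qloc m1 m2 z1 \<union> Rloc m1 m2 z1 \<union> Sloc m1 m2 z1 (m - 1)"
      proof (cases "snd x = 0")
        case True then show ?thesis using QorN x by blast
      next
        case False
        show ?thesis
        using cover[OF x z False]
        proof
          assume "\<exists>j p. kernel_line m1 m2 (snd x) j p \<and> p$2 = 0"
          then show ?thesis using x False by (auto simp: Rloc_def)
        next
          assume "\<exists>j p. kernel_line m1 m2 (snd x) j p \<and> p$2 \<noteq> 0 \<and> m1 + m2 - 2 \<le> 2*j \<and> j \<le> m2"
          then obtain j p where "kernel_line m1 m2 (snd x) j p" "p$2 \<noteq> 0" "m1 + m2 - 2 \<le> 2*j" "j \<le> m2" by blast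
          moreover then have "j = m - 1" using h by linarith
          ultimately show ?thesis using x False h by (auto simp: Sloc_def)
        qed
      qed
    qed
    then show "disj_union3 (QPH0 m1 m2 z1) (Qloc m1 m2 z1) (Rloc m1 m2 z1) (Sloc m1 m2 z1 (m - 1))"
    proof -
      have a: "Rloc m1 m2 z1 \<inter> Sloc m1 m2 z1 (m - 1) = {}" using RS_disj[OF z, of m2 m1 "m - 1"] h by simp
      show ?thesis unfolding disj_union3_def
        using a \<open>QPH0 m1 m2 z1 \<subseteq> _\<close> subs[of m1 m2 z1] QS_disj[of m1 m2 z1] QR_disj[of m1 m2 z1] by blast
    qed
  }
  {
    assume h: "m1 - m2 \<ge> 3"
    have "QPH0 m1 m2 z1 \<subseteq> Qloc m1 m2 z1 \<union> Rloc m1 m2 z1"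
    proof
      fix x assume x: "x \<in> QPH0 m1 m2 z1"
      show "x \<in> Qloc m1 m2 z1 \<union> Rloc m1 m2 z1"
      proof (cases "snd x = 0")
        case True then show ?thesis using QorN x by blast
      next
        case False
        show ?thesis
        using cover[OF x z False]
        proof
          assume "\<exists>j p. kernel_line m1 m2 (snd x) j p \<and> p$2 = 0"
          then show ?thesis using x False by (auto simp: Rloc_def)
        next
          assume "\<exists>j p. kernel_line m1 m2 (snd x) j p \<and> p$2 \<noteq> 0 \<and> m1 + m2 - 2 \<le> 2*j \<and> j \<le> m2"
          then obtain j where "m1 + m2 - 2 \<le> 2*j" "j \<le> m2" by blast
          then show ?thesis using h by linarith
        qed
      qed
    qed
    then show "disj_union2 (QPH0 m1 m2 z1) (Qloc m1 m2 z1) (Rloc m1 m2 z1)"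
      unfolding disj_union2_def using subs QR_disj by blast
  }
qed
end
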